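(* Let $c_1,\dots,c_s\in\{\pm1\}^n$ with $c_i=(c_{i,1},\dots,c_{i,n})$, let $\sigma=\sum_{i=1}^s c_i=(\sigma_1,\dots,\sigma_n)$, and for $i\in\{0,\dots,s\}$ let $A_i=\{j\in[n]:\sigma_j=s-2i\}$. Then for every $i\in\{1,\dots,\lfloor s/2\rfloor\}$ and every set $\mathcal{B}\subseteq A_i$ of size $\lfloor s\rfloor_i$, there exists $j\in[s]$ such that $c_{j,b}=1$ for all $b\in\mathcal{B}$. Similarly, for every $i\in\{\lfloor s/2\rfloor+1,\dots,s-1\}$ and every set $\mathcal{D}\subseteq A_i$ of size $\lfloor s\rfloor_{s-i}$, there exists $j\in[s]$ such that $c_{j,d}=-1$ for all $d\in\mathcal{D}$.
   Context: Sums are real sums. For positive integers $s,i$, $\lfloor s\rfloor_i$ denotes the largest integer $q$ such that $iq<s$ (e.g. $\lfloor 6\rfloor_2=2$); $\lfloor s/2\rfloor$ is the usual floor. *)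

theory Defs
  imports Main
begin

text \<open>For positive integers s, i: the largest integer q with i * q < s.\<close>
definition floor_sub :: "nat \<Rightarrow> nat \<Rightarrow> nat" where
  "floor_sub s i = (GREATEST q. i * q < s)"

definition sigma :: "nat \<Rightarrow> (nat \<Rightarrow> nat \<Rightarrow> int) \<Rightarrow> nat \<Rightarrow> int" where
  "sigma s c b = (\<Sum>j=1..s. c j b)"

definition Aset :: "nat \<Rightarrow> nat \<Rightarrow> (nat \<Rightarrow> nat \<Rightarrow> int) \<Rightarrow> nat \<Rightarrow> nat set" where
  "Aset n s c i = {b \<in> {1..n}. sigma s c b = int s - 2 * int i}"

end

theory Submission
  imports Defs
begin

lemma count_neg:
  fixes c :: "nat \<Rightarrow> nat \<Rightarrow> int"
  assumes pm: "\<And>j. j \<in> {1..s} \<Longrightarrow> c j b = 1 \<or> c j b = -1"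
  shows "sigma s c b = int s - 2 * int (card {j\<in>{1..s}. c j b = -1})"
proof -
  have "sigma s c b = (\<Sum>j=1..s. 1 - 2 * (if c j b = -1 then 1 else 0))"
    unfolding sigma_def by (rule sum.cong) (use pm in auto)
  also have "\<dots> = int s - 2 * (\<Sum>j=1..s. (if c j b = -1 then 1 else 0))"
    by (simp add: sum_subtractf sum_distrib_left)
  also have "(\<Sum>j=1..s. (if c j b = -1 then 1 else 0)) = (int (card {j\<in>{1..s}. c j b = -1}))"
    by (simp add: sum.If_cases) (rule arg_cong[where f=card], auto)
  finally show ?thesis .
qed

lemma count_pos:
  fixes c :: "nat \<Rightarrow> nat \<Rightarrow> int"
  assumes pm: "\<And>j. j \<in> {1..s} \<Longrightarrow> c j b = 1 \<or> c j b = -1"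
  shows "card {j\<in>{1..s}. c j b \<noteq> 1} = card {j\<in>{1..s}. c j b = -1}"
proof -
  have "{j\<in>{1..s}. c j b \<noteq> 1} = {j\<in>{1..s}. c j b = -1}" using pm by force
  thus ?thesis by simp
qed

lemma pigeon:
  fixes c :: "nat \<Rightarrow> nat \<Rightarrow> int"
  assumes fin: "finite D"
    and k: "\<And>b. b \<in> D \<Longrightarrow> card {j\<in>{1..s}. c j b \<noteq> v} = k"
    and lt: "k * card D < s"
  shows "\<exists>j\<in>{1..s}. \<forall>b\<in>D. c j b = v"
proof (rule ccontr)
  assume "\<not> ?thesis"
  hence "{1..s} \<subseteq> (\<Union>b\<in>D. {j\<in>{1..s}. c j b \<noteq> v})" by blast
  hence "card {1..s} \<le> card (\<Union>b\<in>D. {j\<in>{1..s}. c j b \<noteq> v})"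
    by (intro card_mono) (use fin in auto)
  also have "\<dots> \<le> (\<Sum>b\<in>D. card {j\<in>{1..s}. c j b \<noteq> v})"
    by (rule card_UN_le[OF fin])
  also have "\<dots> = k * card D" using k by simp
  finally show False using lt by simp
qed

lemma floor_sub_lt:
  assumes "0 < i" "0 < s"
  shows "i * floor_sub s i < s"
  unfolding floor_sub_def
proof (rule GreatestI_nat[where k=0])
  show "i * 0 < s" using assms by simp
  fix y assume "i * y < s"
  have "y \<le> i * y" using assms(1) by simp
  thus "y \<le> s" using \<open>i * y < s\<close> by linarith
qed

theorem lemma2:
  fixes n s :: nat and c :: "nat \<Rightarrow> nat \<Rightarrow> int"
  assumes pm: "\<And>j b. j \<in> {1..s} \<Longrightarrow> b \<in> {1..n} \<Longrightarrow> c j b = 1 \<or> c j b = -1"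
  shows "(\<forall>i \<in> {1..s div 2}. \<forall>B. B \<subseteq> Aset n s c i \<and> card B = floor_sub s i \<longrightarrow>
            (\<exists>j \<in> {1..s}. \<forall>b \<in> B. c j b = 1))
       \<and> (\<forall>i \<in> {s div 2 + 1..s - 1}. \<forall>D. D \<subseteq> Aset n s c i \<and> card D = floor_sub s (s - i) \<longrightarrow>
            (\<exists>j \<in> {1..s}. \<forall>d \<in> D. c j d = -1))"
proof (intro conjI ballI allI impI)
  fix i B assume i: "i \<in> {1..s div 2}" and B: "B \<subseteq> Aset n s c i \<and> card B = floor_sub s i"
  have "B \<subseteq> {1..n}" using B unfolding Aset_def by auto
  hence fin: "finite B" using finite_subset by blast
  show "\<exists>j \<in> {1..s}. \<forall>b \<in> B. c j b = 1"
  proof (rule pigeon[OF fin, where k=i])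
    fix b assume b: "b \<in> B"
    hence bn: "b \<in> {1..n}" and sg: "sigma s c b = int s - 2 * int i" using B unfolding Aset_def by auto
    have "sigma s c b = int s - 2 * int (card {j\<in>{1..s}. c j b = -1})"
      by (rule count_neg) (use pm bn in auto)
    with sg have "card {j\<in>{1..s}. c j b = -1} = i" by simp
    thus "card {j\<in>{1..s}. c j b \<noteq> 1} = i" using count_pos[of s c b] pm bn by simp
  next
    have "0 < i" "0 < s" using i by auto
    thus "i * card B < s" using B floor_sub_lt[of i s] by simp
  qed
next
  fix i D assume i: "i \<in> {s div 2 + 1..s - 1}" and D: "D \<subseteq> Aset n s c i \<and> card D = floor_sub s (s - i)"
  have "D \<subseteq> {1..n}" using D unfolding Aset_def by auto
  hence fin: "finite D" using finite_subset by blast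
  show "\<exists>j \<in> {1..s}. \<forall>b \<in> D. c j b = -1"
  proof (rule pigeon[OF fin, where k="s - i"])
    fix b assume b: "b \<in> D"
    hence bn: "b \<in> {1..n}" and sg: "sigma s c b = int s - 2 * int i" using D unfolding Aset_def by auto
    have "sigma s c b = int s - 2 * int (card {j\<in>{1..s}. c j b = -1})"
      by (rule count_neg) (use pm bn in auto)
    with sg have m: "card {j\<in>{1..s}. c j b = -1} = i" by simp
    have un: "{1..s} = {j\<in>{1..s}. c j b = -1} \<union> {j\<in>{1..s}. c j b \<noteq> -1}" by auto
    have "card {1..s} = card {j\<in>{1..s}. c j b = -1} + card {j\<in>{1..s}. c j b \<noteq> -1}"
      by (subst un, rule card_Un_disjoint) auto
    thus "card {j\<in>{1..s}. c j b \<noteq> -1} = s - i" using m by simp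
  next
    have "0 < s - i" "0 < s" using i by auto
    thus "(s - i) * card D < s" using D floor_sub_lt[of "s - i" s] by simp
  qed
qed

end
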